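(* Let $\bar\pi^*$ be an optimal (cost-minimizing) policy for $\bar{\mathcal M}$ with state-action value $\bar Q^*$ and state value $\bar V^*$. Let $G_0$ be the set of intervention rules $(\bar Q,\mu,0)$ (threshold $\eta=0$) that are admissible and satisfy $\bar Q(d_0,\mu)=\bar V^*(d_0)$. Then $\mathcal G^*=(\bar Q^*,\bar\pi^*,0)\in G_0$, and for any $\mathcal G\in G_0$ and any policy $\pi$, $$\mathrm{Supp}_{\mathcal S\times\mathcal A}(\tilde d^{\pi})\subseteq \mathrm{Supp}_{\mathcal S\times\mathcal A}(\tilde d^{*,\pi}),$$ where $\tilde d^\pi$ and $\tilde d^{*,\pi}$ are the discounted state-action distributions of $\pi$ in the absorbing MDPs induced by $\mathcal G$ and $\mathcal G^*$ respectively, and $\mathrm{Supp}_{\mathcal S\times\mathcal A}(d)=\{(s,a)\in\mathcal S\times\mathcal A: d(s,a)>0\}$.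
   Context: $\mathcal M=(\mathcal S,\mathcal A,P,r,\gamma)$ is a discounted MDP with discrete state and action spaces (minima over actions attained), reward $r\in[0,1]$, discount $\gamma\in[0,1)$, initial distribution $d_0$. $\mathcal S$ contains two distinguished states $s_\triangleright,s_\circ$; $\mathcal S_{\mathrm{unsafe}}=\{s_\triangleright,s_\circ\}$, $\mathcal S_{\mathrm{safe}}=\mathcal S\setminus\mathcal S_{\mathrm{unsafe}}$; from $s_\triangleright$ every action leads to $s_\circ$ w.p. 1, $s_\circ$ is absorbing, $r=0$ on $\mathcal S_{\mathrm{unsafe}}$, $d_0(s_\circ)=0$. Cost $c(s,a)=\mathbb 1\{s=s_\triangleright\}$; $\bar{\mathcal M}=(\mathcal S,\mathcal A,P,c,\gamma)$; an optimal policy of $\bar{\mathcal M}$ minimizes the expected discounted cost from every state. For $g:\mathcal S\times\mathcal A\to\mathbb R$, $g(s,\mu)=\mathbb E_{a\sim\mu(\cdot|s)}g(s,a)$, $g(d_0,\mu)=\mathbb E_{s\sim d_0}g(s,\mu)$; $\bar V^*(d_0)=\mathbb E_{s\sim d_0}\bar V^*(s)$. Intervention rule: a triple $\mathcal G=(\bar Q,\mu,\eta)$ with backup policy $\mu$, $\eta\in[0,1]$, $\bar Q:\mathcal S_{\mathrm{safe}}\times\mathcal A\to[0,1]$ extended by $\bar Q(s_\triangleright,a)=1$, $\bar Q(s_\circ,a)=0$; intervention set $\mathcal I=\{(s,a)\in\mathcal S_{\mathrm{safe}}\times\mathcal A:\bar Q(s,a)-\bar Q(s,\mu)>\eta\}$.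 It is admissible if for all $s\in\mathcal S_{\mathrm{safe}},a$: $\bar Q(s,a)\in[0,\gamma]$ and $\bar Q(s,a)\ge c(s,a)+\gamma\mathbb E_{s'\sim P(\cdot|s,a)}[\bar Q(s',\mu)]$. Absorbing MDP induced by $\mathcal G$ (with a constant $\tilde R\le0$): state space $\mathcal S\cup\{s_\dagger\}$; reward $\tilde R$ on $\mathcal I$, $0$ at $s_\dagger$, $r$ otherwise; from $(s,a)\in\mathcal I$ or from $s_\dagger$ the next state is $s_\dagger$ w.p. 1, otherwise transitions follow $P$. Policies are extended to $s_\dagger$ arbitrarily. The discounted state-action distribution of $\pi$ is $\tilde d^\pi(s,a)=(1-\gamma)\sum_t\gamma^t\Pr(s_t=s,a_t=a)$ for trajectories of $\pi$ from $s_0\sim d_0$ in this MDP. *)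

theory Defs
  imports "HOL-Probability.Probability"
begin

fun sdist :: "('x \<Rightarrow> 'a \<Rightarrow> 'x pmf) \<Rightarrow> ('x \<Rightarrow> 'a pmf) \<Rightarrow> 'x pmf \<Rightarrow> nat \<Rightarrow> 'x pmf" where
  "sdist K p init 0 = init"
| "sdist K p init (Suc n) = bind_pmf (sdist K p init n) (\<lambda>x. bind_pmf (p x) (\<lambda>a. K x a))"

definition sadist :: "('x \<Rightarrow> 'a \<Rightarrow> 'x pmf) \<Rightarrow> ('x \<Rightarrow> 'a pmf) \<Rightarrow> 'x pmf \<Rightarrow> nat \<Rightarrow> ('x \<times> 'a) pmf" where
  "sadist K p init n = bind_pmf (sdist K p init n) (\<lambda>x. map_pmf (\<lambda>a. (x, a)) (p x))"

definition disc_sa :: "('x \<Rightarrow> 'a \<Rightarrow> 'x pmf) \<Rightarrow> ('x \<Rightarrow> 'a pmf) \<Rightarrow> 'x pmf \<Rightarrow> real \<Rightarrow> 'x \<times> 'a \<Rightarrow> real" where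
  "disc_sa K p init \<gamma> xa = (1 - \<gamma>) * (\<Sum>t. \<gamma> ^ t * pmf (sadist K p init t) xa)"

definition value_fn :: "('x \<Rightarrow> 'a \<Rightarrow> 'x pmf) \<Rightarrow> ('x \<Rightarrow> 'a \<Rightarrow> real) \<Rightarrow> real \<Rightarrow> ('x \<Rightarrow> 'a pmf) \<Rightarrow> 'x \<Rightarrow> real" where
  "value_fn K c \<gamma> p x =
     (\<Sum>t. \<gamma> ^ t * measure_pmf.expectation (sadist K p (return_pmf x) t) (\<lambda>(y, a). c y a))"

definition qvalue :: "('x \<Rightarrow> 'a \<Rightarrow> 'x pmf) \<Rightarrow> ('x \<Rightarrow> 'a \<Rightarrow> real) \<Rightarrow> real \<Rightarrow> ('x \<Rightarrow> 'a pmf) \<Rightarrow> 'x \<Rightarrow> 'a \<Rightarrow> real" where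
  "qvalue K c \<gamma> p x a = c x a + \<gamma> * measure_pmf.expectation (K x a) (\<lambda>y. value_fn K c \<gamma> p y)"

definition cost :: "'s \<Rightarrow> 's \<Rightarrow> 'a \<Rightarrow> real" where
  "cost s_tri s a = (if s = s_tri then 1 else 0)"

definition polQ :: "('s \<Rightarrow> 'a \<Rightarrow> real) \<Rightarrow> ('s \<Rightarrow> 'a pmf) \<Rightarrow> 's \<Rightarrow> real" where
  "polQ g \<mu> s = measure_pmf.expectation (\<mu> s) (\<lambda>a. g s a)"

definition safe :: "'s \<Rightarrow> 's \<Rightarrow> 's \<Rightarrow> bool" where
  "safe s_tri s_circ s \<longleftrightarrow> s \<noteq> s_tri \<and> s \<noteq> s_circ"

definition extQ :: "'s \<Rightarrow> 's \<Rightarrow> ('s \<Rightarrow> 'a \<Rightarrow> real) \<Rightarrow> 's \<Rightarrow> 'a \<Rightarrow> real" where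
  "extQ s_tri s_circ Q s a = (if s = s_tri then 1 else if s = s_circ then 0 else Q s a)"

definition interv_set :: "'s \<Rightarrow> 's \<Rightarrow> ('s \<Rightarrow> 'a \<Rightarrow> real) \<Rightarrow> ('s \<Rightarrow> 'a pmf) \<Rightarrow> real \<Rightarrow> ('s \<times> 'a) set" where
  "interv_set s_tri s_circ Q \<mu> \<eta> =
     {(s, a). safe s_tri s_circ s \<and>
        extQ s_tri s_circ Q s a - polQ (extQ s_tri s_circ Q) \<mu> s > \<eta>}"

definition admissible :: "('s \<Rightarrow> 'a \<Rightarrow> 's pmf) \<Rightarrow> real \<Rightarrow> 's \<Rightarrow> 's \<Rightarrow> ('s \<Rightarrow> 'a \<Rightarrow> real) \<Rightarrow> ('s \<Rightarrow> 'a pmf) \<Rightarrow> bool" where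
  "admissible P \<gamma> s_tri s_circ Q \<mu> \<longleftrightarrow>
     (\<forall>s a. safe s_tri s_circ s \<longrightarrow>
        0 \<le> Q s a \<and> Q s a \<le> \<gamma> \<and>
        Q s a \<ge> cost s_tri s a +
          \<gamma> * measure_pmf.expectation (P s a) (\<lambda>s'. polQ (extQ s_tri s_circ Q) \<mu> s'))"

text \<open>The set G_0 of admissible rules with threshold 0 and Qbar(d0,mu) = Vbar*(d0)
  (the value Vbar*(d0) is passed as parameter Vd0).\<close>
definition G0 :: "('s \<Rightarrow> 'a \<Rightarrow> 's pmf) \<Rightarrow> real \<Rightarrow> 's pmf \<Rightarrow> 's \<Rightarrow> 's \<Rightarrow> real \<Rightarrow>
    (('s \<Rightarrow> 'a \<Rightarrow> real) \<times> ('s \<Rightarrow> 'a pmf) \<times> real) set" where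
  "G0 P \<gamma> d0 s_tri s_circ Vd0 =
     {(Q, \<mu>, \<eta>). \<eta> = 0 \<and> admissible P \<gamma> s_tri s_circ Q \<mu> \<and>
        measure_pmf.expectation d0 (\<lambda>s. polQ (extQ s_tri s_circ Q) \<mu> s) = Vd0}"

text \<open>Absorbing MDP: state None is the absorbing state s_dagger.\<close>
definition abs_P :: "('s \<Rightarrow> 'a \<Rightarrow> 's pmf) \<Rightarrow> ('s \<times> 'a) set \<Rightarrow> 's option \<Rightarrow> 'a \<Rightarrow> 's option pmf" where
  "abs_P P I x a = (case x of None \<Rightarrow> return_pmf None
      | Some s \<Rightarrow> if (s, a) \<in> I then return_pmf None else map_pmf Some (P s a))"

definition abs_pol :: "('s \<Rightarrow> 'a pmf) \<Rightarrow> 's option \<Rightarrow> 'a pmf" where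
  "abs_pol \<pi> x = (case x of None \<Rightarrow> return_pmf undefined | Some s \<Rightarrow> \<pi> s)"

definition dtilde :: "('s \<Rightarrow> 'a \<Rightarrow> 's pmf) \<Rightarrow> real \<Rightarrow> 's pmf \<Rightarrow> ('s \<times> 'a) set \<Rightarrow> ('s \<Rightarrow> 'a pmf) \<Rightarrow> 's \<times> 'a \<Rightarrow> real" where
  "dtilde P \<gamma> d0 I \<pi> sa = disc_sa (abs_P P I) (abs_pol \<pi>) (map_pmf Some d0) \<gamma> (Some (fst sa), snd sa)"

definition supp_SA :: "('s \<times> 'a \<Rightarrow> real) \<Rightarrow> ('s \<times> 'a) set" where
  "supp_SA d = {sa. d sa > 0}"

end

theory Submission
  imports Defs
begin
lemma int_bdd: fixes f :: "'x \<Rightarrow> real" assumes "\<And>x. \<bar>f x\<bar> \<le> B"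
  shows "integrable (measure_pmf M) f"
  by (rule measure_pmf.integrable_const_bound[where B=B]) (auto simp: assms)

lemma int_bind: fixes f :: "'x \<Rightarrow> real" assumes "\<And>x. \<bar>f x\<bar> \<le> B"
  shows "measure_pmf.expectation (bind_pmf M N) f = measure_pmf.expectation M (\<lambda>x. measure_pmf.expectation (N x) f)"
  unfolding measure_pmf_bind
  by (rule integral_bind[where K="count_space UNIV" and B=B and B'=1]) (auto simp: assms intro: measure_pmf_in_subprob_algebra prob_space_imp_subprob_space measure_pmf.emeasure_space_le_1)

lemma E_le: fixes f :: "'x \<Rightarrow> real" assumes "\<And>x. f x \<le> b" "\<And>x. \<bar>f x\<bar> \<le> B"
  shows "measure_pmf.expectation M f \<le> b"
proof -
  have "measure_pmf.expectation M f \<le> measure_pmf.expectation M (\<lambda>_. b)"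
    by (rule integral_mono) (auto intro: int_bdd assms)
  then show ?thesis by simp
qed

lemma E_ge: fixes f :: "'x \<Rightarrow> real" assumes "\<And>x. b \<le> f x" "\<And>x. \<bar>f x\<bar> \<le> B"
  shows "b \<le> measure_pmf.expectation M f"
proof -
  have "measure_pmf.expectation M (\<lambda>_. b) \<le> measure_pmf.expectation M f"
    by (rule integral_mono) (auto intro: int_bdd assms)
  then show ?thesis by simp
qed

lemma E_abs: fixes f :: "'x \<Rightarrow> real" assumes "\<And>x. \<bar>f x\<bar> \<le> B"
  shows "\<bar>measure_pmf.expectation M f\<bar> \<le> B"
proof -
  have "measure_pmf.expectation M f \<le> B" by (rule E_le[where B=B]) (use assms abs_le_iff in auto)
  moreover have "-B \<le> measure_pmf.expectation M f" by (rule E_ge[where B=B]) (use assms in \<open>auto simp: abs_le_iff\<close>, smt (verit) assms)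
  ultimately show ?thesis by simp
qed

lemma sdist_bind: "sdist K p init n = bind_pmf init (\<lambda>x. sdist K p (return_pmf x) n)"
  by (induction n) (simp_all add: bind_return_pmf' bind_assoc_pmf)

lemma sdist_shift: "sdist K p init (Suc n) = sdist K p (bind_pmf init (\<lambda>x. bind_pmf (p x) (\<lambda>a. K x a))) n"
  by (induction n) simp_all

lemma sadist_Suc: "sadist K p (return_pmf y) (Suc t) =
   bind_pmf (bind_pmf (p y) (\<lambda>a. K y a)) (\<lambda>z. sadist K p (return_pmf z) t)"
  unfolding sadist_def
  apply (subst sdist_shift)
  apply (subst sdist_bind)
  apply (simp add: bind_return_pmf bind_assoc_pmf)
  done

definition fterm :: "('x \<Rightarrow> 'a \<Rightarrow> 'x pmf) \<Rightarrow> ('x \<Rightarrow> 'a pmf) \<Rightarrow> ('x \<Rightarrow> 'a \<Rightarrow> real) \<Rightarrow> nat \<Rightarrow> 'x \<Rightarrow> real" where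
  "fterm K p c t x = measure_pmf.expectation (sadist K p (return_pmf x) t) (\<lambda>(y, a). c y a)"

lemma value_fn_eq: "value_fn K c \<gamma> p x = (\<Sum>t. \<gamma> ^ t * fterm K p c t x)"
  by (simp add: value_fn_def fterm_def)

locale chain =
  fixes K :: "'x \<Rightarrow> 'a \<Rightarrow> 'x pmf" and p :: "'x \<Rightarrow> 'a pmf" and c :: "'x \<Rightarrow> 'a \<Rightarrow> real" and \<gamma> :: real
  assumes c01: "\<And>x a. 0 \<le> c x a \<and> c x a \<le> 1"
    and g0: "0 \<le> \<gamma>" and g1: "\<gamma> < 1"
begin

lemma fterm_bd: "0 \<le> fterm K p c t x \<and> fterm K p c t x \<le> 1"
  unfolding fterm_def using c01
  by (intro conjI E_ge[where B=1] E_le[where B=1]) (auto split: prod.splits simp: abs_le_iff)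

lemma fterm_abs: "\<bar>fterm K p c t x\<bar> \<le> 1"
  using fterm_bd by (simp add: abs_le_iff)

lemma f0: "fterm K p c 0 x = measure_pmf.expectation (p x) (c x)"
  by (simp add: fterm_def sadist_def bind_return_pmf)

lemma fSuc: "fterm K p c (Suc t) x = measure_pmf.expectation (bind_pmf (p x) (\<lambda>a. K x a)) (fterm K p c t)"
  unfolding fterm_def sadist_Suc
  by (rule int_bind[where B=1]) (use c01 in \<open>auto split: prod.splits simp: abs_le_iff\<close>)

lemma summ: "summable (\<lambda>t. \<gamma> ^ t * fterm K p c t x)"
  by (rule summable_comparison_test[where g="\<lambda>t. \<gamma>^t"])
     (use fterm_bd g0 g1 in \<open>auto intro!: exI[of _ 0] mult_right_le_one_le simp: summable_geometric\<close>)

lemma V_bd: "0 \<le> value_fn K c \<gamma> p x \<and> value_fn K c \<gamma> p x \<le> 1 / (1 - \<gamma>)"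
proof
  show "0 \<le> value_fn K c \<gamma> p x" unfolding value_fn_eq
    by (rule suminf_nonneg[OF summ]) (use fterm_bd g0 in auto)
  have "value_fn K c \<gamma> p x \<le> (\<Sum>t. \<gamma> ^ t)" unfolding value_fn_eq
    by (rule suminf_le[OF _ summ]) (use fterm_bd g0 g1 in \<open>auto intro: mult_right_le_one_le simp: summable_geometric\<close>)
  then show "value_fn K c \<gamma> p x \<le> 1 / (1 - \<gamma>)" using g0 g1 by (simp add: suminf_geometric)
qed

lemma V_abs: "\<bar>value_fn K c \<gamma> p x\<bar> \<le> 1 / (1 - \<gamma>)"
  using V_bd[of x] by (simp add: abs_le_iff)


lemma term_bd: "norm (\<gamma> ^ i * fterm K p c i y) \<le> \<gamma> ^ i" "\<bar>\<gamma> ^ i * fterm K p c i y\<bar> \<le> 1"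
  "0 \<le> \<gamma> ^ i * fterm K p c i y"
proof -
  have a: "0 \<le> fterm K p c i y" "fterm K p c i y \<le> 1" using fterm_bd by auto
  have b: "0 \<le> \<gamma>^i" "\<gamma>^i \<le> 1" using g0 g1 by (auto intro: power_le_one)
  have "norm (\<gamma> ^ i * fterm K p c i y) = \<gamma> ^ i * fterm K p c i y" using a b by (simp add: abs_mult)
  moreover have "\<gamma> ^ i * fterm K p c i y \<le> \<gamma> ^ i" using a b by (simp add: mult_left_le)
  moreover have "\<gamma> ^ i * fterm K p c i y \<le> 1" using a b by (simp add: mult_le_one)
  ultimately show "norm (\<gamma> ^ i * fterm K p c i y) \<le> \<gamma> ^ i" "\<bar>\<gamma> ^ i * fterm K p c i y\<bar> \<le> 1"
     "0 \<le> \<gamma> ^ i * fterm K p c i y" using a b by auto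
qed

lemma EV_bd: "0 \<le> measure_pmf.expectation M (value_fn K c \<gamma> p) \<and> measure_pmf.expectation M (value_fn K c \<gamma> p) \<le> 1 / (1 - \<gamma>)"
  by (intro conjI E_ge[where B="1/(1-\<gamma>)"] E_le[where B="1/(1-\<gamma>)"]) (auto simp: V_abs V_bd)

lemma EV_abs: "\<bar>measure_pmf.expectation M (value_fn K c \<gamma> p)\<bar> \<le> 1 / (1 - \<gamma>)"
  using EV_bd[of M] by (simp add: abs_le_iff)

lemma summ_E: "summable (\<lambda>t. \<gamma> ^ t * measure_pmf.expectation M (fterm K p c t))"
proof (rule summable_comparison_test[where g="\<lambda>t. \<gamma>^t"])
  show "summable (\<lambda>t. \<gamma>^t)" using g0 g1 by (simp add: summable_geometric)
  have "\<And>t. norm (\<gamma> ^ t * measure_pmf.expectation M (fterm K p c t)) \<le> \<gamma>^t"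
  proof -
    fix t
    have a: "0 \<le> measure_pmf.expectation M (fterm K p c t)" "measure_pmf.expectation M (fterm K p c t) \<le> 1"
      by (auto intro!: E_le[where B=1] E_ge[where B=1] simp: fterm_bd fterm_abs)
    have b: "0 \<le> \<gamma>^t" using g0 by simp
    show "norm (\<gamma> ^ t * measure_pmf.expectation M (fterm K p c t)) \<le> \<gamma>^t"
      using a b by (simp add: abs_mult mult_left_le)
  qed
  then show "\<exists>N. \<forall>n\<ge>N. norm (\<gamma> ^ n * measure_pmf.expectation M (fterm K p c n)) \<le> \<gamma>^n" by blast
qed

lemma interchange: "(\<Sum>t. \<gamma> ^ t * measure_pmf.expectation M (fterm K p c t)) = measure_pmf.expectation M (value_fn K c \<gamma> p)"
proof -
  let ?f = "fterm K p c"
  have "(\<Sum>t. \<gamma> ^ t * measure_pmf.expectation M (?f t)) = (\<Sum>t. measure_pmf.expectation M (\<lambda>y. \<gamma> ^ t * ?f t y))"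
    by simp
  also have "\<dots> = measure_pmf.expectation M (\<lambda>y. \<Sum>t. \<gamma> ^ t * ?f t y)"
  proof (rule integral_suminf[symmetric])
    show "\<And>i. integrable (measure_pmf M) (\<lambda>y. \<gamma> ^ i * ?f i y)"
      by (intro integrable_mult_right int_bdd[where B=1] fterm_abs)
    show "AE y in measure_pmf M. summable (\<lambda>i. norm (\<gamma> ^ i * ?f i y))"
    proof (rule AE_pmfI)
      fix y
      have h: "\<And>n. norm (norm (\<gamma> ^ n * ?f n y)) \<le> \<gamma> ^ n" using term_bd(1) by simp
      show "summable (\<lambda>i. norm (\<gamma> ^ i * ?f i y))"
        apply (rule summable_comparison_test[where g="\<lambda>t. \<gamma>^t"])
        using h apply blast
        using g0 g1 apply (simp add: summable_geometric)
        done
    qed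
    have "\<And>i. (\<integral>y. norm (\<gamma> ^ i * ?f i y) \<partial>measure_pmf M) = \<gamma> ^ i * measure_pmf.expectation M (?f i)"
    proof -
      fix i
      have "(\<integral>y. norm (\<gamma> ^ i * ?f i y) \<partial>measure_pmf M) = (\<integral>y. \<gamma> ^ i * ?f i y \<partial>measure_pmf M)"
        by (rule Bochner_Integration.integral_cong) (use term_bd(3) in auto)
      then show "(\<integral>y. norm (\<gamma> ^ i * ?f i y) \<partial>measure_pmf M) = \<gamma> ^ i * measure_pmf.expectation M (?f i)" by simp
    qed
    then show "summable (\<lambda>i. (\<integral>y. norm (\<gamma> ^ i * ?f i y) \<partial>measure_pmf M))"
      using summ_E by simp
  qed
  finally show ?thesis by (simp only: value_fn_eq[abs_def])
qed


lemma Bell: "value_fn K c \<gamma> p x =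
   measure_pmf.expectation (p x) (\<lambda>a. c x a + \<gamma> * measure_pmf.expectation (K x a) (value_fn K c \<gamma> p))"
proof -
  let ?f = "fterm K p c" and ?V = "value_fn K c \<gamma> p" and ?st = "bind_pmf (p x) (\<lambda>a. K x a)"
  have A: "(\<Sum>t. \<gamma> ^ Suc t * ?f (Suc t) x) = ?V x - ?f 0 x"
    unfolding value_fn_eq using suminf_split_head[OF summ[of x]] by simp
  have "(\<Sum>t. \<gamma> ^ Suc t * ?f (Suc t) x) = (\<Sum>t. \<gamma> * (\<gamma> ^ t * measure_pmf.expectation ?st (?f t)))"
    by (simp only: fSuc power_Suc mult.assoc)
  also have "\<dots> = \<gamma> * (\<Sum>t. \<gamma> ^ t * measure_pmf.expectation ?st (?f t))"
    by (rule suminf_mult[OF summ_E])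
  also have "\<dots> = \<gamma> * measure_pmf.expectation ?st ?V" by (simp only: interchange)
  also have "measure_pmf.expectation ?st ?V = measure_pmf.expectation (p x) (\<lambda>a. measure_pmf.expectation (K x a) ?V)"
    by (rule int_bind[where B="1/(1-\<gamma>)"]) (rule V_abs)
  finally have B: "(\<Sum>t. \<gamma> ^ Suc t * ?f (Suc t) x) = \<gamma> * measure_pmf.expectation (p x) (\<lambda>a. measure_pmf.expectation (K x a) ?V)" .
  have i1: "integrable (measure_pmf (p x)) (c x)" by (rule int_bdd[where B=1]) (use c01 in auto)
  have i2: "integrable (measure_pmf (p x)) (\<lambda>a. measure_pmf.expectation (K x a) ?V)"
    by (rule int_bdd[where B="1/(1-\<gamma>)"]) (rule EV_abs)
  have E: "measure_pmf.expectation (p x) (\<lambda>a. c x a + \<gamma> * measure_pmf.expectation (K x a) ?V)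
     = measure_pmf.expectation (p x) (c x) + \<gamma> * measure_pmf.expectation (p x) (\<lambda>a. measure_pmf.expectation (K x a) ?V)"
    using i1 i2 by simp
  show ?thesis using A B E unfolding f0 by linarith
qed


lemma Super:
  assumes W: "\<And>x. 0 \<le> W x \<and> W x \<le> 1"
    and sup: "\<And>x. measure_pmf.expectation (p x) (\<lambda>a. c x a + \<gamma> * measure_pmf.expectation (K x a) W) \<le> W x"
  shows "value_fn K c \<gamma> p x \<le> W x"
proof -
  let ?f = "fterm K p c"
  have Wabs: "\<And>x. \<bar>W x\<bar> \<le> 1" using W by (simp add: abs_le_iff)
  have claim: "(\<Sum>t<n. \<gamma> ^ t * ?f t x) \<le> W x" for n x
  proof (induction n arbitrary: x)
    case 0
    then show ?case using W by simp
  next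
    case (Suc n)
    let ?st = "bind_pmf (p x) (\<lambda>a. K x a)"
    have int_t: "\<And>t. integrable (measure_pmf ?st) (\<lambda>y. \<gamma> ^ t * ?f t y)"
      by (intro integrable_mult_right int_bdd[where B=1] fterm_abs)
    have "(\<Sum>t<Suc n. \<gamma> ^ t * ?f t x) = ?f 0 x + (\<Sum>t<n. \<gamma> ^ Suc t * ?f (Suc t) x)"
      by (simp only: sum.lessThan_Suc_shift) simp
    also have "(\<Sum>t<n. \<gamma> ^ Suc t * ?f (Suc t) x) = \<gamma> * (\<Sum>t<n. measure_pmf.expectation ?st (\<lambda>y. \<gamma> ^ t * ?f t y))"
      by (simp add: fSuc sum_distrib_left mult.assoc)
    also have "(\<Sum>t<n. measure_pmf.expectation ?st (\<lambda>y. \<gamma> ^ t * ?f t y)) = measure_pmf.expectation ?st (\<lambda>y. \<Sum>t<n. \<gamma> ^ t * ?f t y)"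
      by (rule Bochner_Integration.integral_sum[symmetric, where f="\<lambda>t y. \<gamma> ^ t * ?f t y"]) (rule int_t)
    also have "measure_pmf.expectation ?st (\<lambda>y. \<Sum>t<n. \<gamma> ^ t * ?f t y) \<le> measure_pmf.expectation ?st W"
      by (rule integral_mono) (auto intro: Suc.IH int_bdd[where B=1] Wabs integrable_sum int_t)
    also have "measure_pmf.expectation ?st W = measure_pmf.expectation (p x) (\<lambda>a. measure_pmf.expectation (K x a) W)"
      by (rule int_bind[where B=1]) (rule Wabs)
    finally have A: "(\<Sum>t<Suc n. \<gamma> ^ t * ?f t x) \<le> ?f 0 x + \<gamma> * measure_pmf.expectation (p x) (\<lambda>a. measure_pmf.expectation (K x a) W)"
      using g0 by (simp add: mult_left_mono)
    have i1: "integrable (measure_pmf (p x)) (c x)" by (rule int_bdd[where B=1]) (use c01 in auto)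
    have i2: "integrable (measure_pmf (p x)) (\<lambda>a. measure_pmf.expectation (K x a) W)"
      by (rule int_bdd[where B=1]) (rule E_abs, rule Wabs)
    have E: "measure_pmf.expectation (p x) (\<lambda>a. c x a + \<gamma> * measure_pmf.expectation (K x a) W)
       = measure_pmf.expectation (p x) (c x) + \<gamma> * measure_pmf.expectation (p x) (\<lambda>a. measure_pmf.expectation (K x a) W)"
      using i1 i2 by simp
    show ?case using A E sup[of x] unfolding f0 by linarith
  qed
  show ?thesis unfolding value_fn_eq by (rule suminf_le_const[OF summ]) (rule claim)
qed

end

lemma sadist_mono:
  assumes "x \<in> set_pmf (sdist K p init t) \<Longrightarrow> x \<in> set_pmf (sdist K' p init' t)"
    and "(x, a) \<in> set_pmf (sadist K p init t)"
  shows "(x, a) \<in> set_pmf (sadist K' p init' t)"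
  using assms unfolding sadist_def by auto

lemma disc_mono:
  fixes \<gamma> :: real
  assumes g: "0 \<le> \<gamma>" "\<gamma> < 1"
    and m: "\<And>t. 0 < pmf (sadist K p init t) xa \<Longrightarrow> 0 < pmf (sadist K' p' init' t) xa"
    and pos: "0 < disc_sa K p init \<gamma> xa"
  shows "0 < disc_sa K' p' init' \<gamma> xa"
proof -
  have sm: "summable (\<lambda>t. \<gamma> ^ t * pmf (sadist K p init t) xa)" for K p init
  proof (rule summable_comparison_test[where g="\<lambda>t. \<gamma>^t"])
    have "norm (\<gamma> ^ t * pmf (sadist K p init t) xa) \<le> \<gamma> ^ t" for t
    proof -
      have "norm (\<gamma> ^ t * pmf (sadist K p init t) xa) = \<gamma> ^ t * pmf (sadist K p init t) xa"
        using g by (simp add: abs_mult)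
      also have "\<dots> \<le> \<gamma> ^ t" using g by (simp add: mult_left_le pmf_le_1)
      finally show ?thesis .
    qed
    then show "\<exists>N. \<forall>n\<ge>N. norm (\<gamma> ^ n * pmf (sadist K p init n) xa) \<le> \<gamma> ^ n" by blast
    show "summable (\<lambda>t. \<gamma>^t)" using g by (simp add: summable_geometric)
  qed
  have "(\<Sum>t. \<gamma> ^ t * pmf (sadist K p init t) xa) \<noteq> 0"
    using pos by (auto simp: disc_sa_def)
  have "\<exists>t. \<gamma> ^ t * pmf (sadist K p init t) xa \<noteq> 0"
  proof (rule ccontr)
    assume "\<nexists>t. \<gamma> ^ t * pmf (sadist K p init t) xa \<noteq> 0"
    then have "(\<lambda>t. \<gamma> ^ t * pmf (sadist K p init t) xa) = (\<lambda>_. 0)" by auto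
    with \<open>(\<Sum>t. \<gamma> ^ t * pmf (sadist K p init t) xa) \<noteq> 0\<close> show False by simp
  qed
  then obtain t where t: "\<gamma> ^ t * pmf (sadist K p init t) xa \<noteq> 0" by blast
  then have n1: "\<gamma> ^ t \<noteq> 0" and n2: "pmf (sadist K p init t) xa \<noteq> 0" by auto
  have "0 \<le> \<gamma> ^ t" using g by simp
  with n1 have g1: "0 < \<gamma> ^ t" by linarith
  have "0 \<le> pmf (sadist K p init t) xa" by (rule pmf_nonneg)
  with n2 have "0 < pmf (sadist K p init t) xa" by linarith
  then have "0 < pmf (sadist K' p' init' t) xa" by (rule m)
  with g1 have "0 < \<gamma> ^ t * pmf (sadist K' p' init' t) xa" by (rule mult_pos_pos)
  then have "0 < (\<Sum>t. \<gamma> ^ t * pmf (sadist K' p' init' t) xa)"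
    using suminf_pos2[OF sm[of K' p' init'], of t] g by simp
  then show ?thesis using g by (simp add: disc_sa_def)
qed


locale mdp =
  fixes P :: "'s \<Rightarrow> 'a \<Rightarrow> 's pmf" and \<gamma> :: real and s_tri s_circ :: 's and pibar :: "'s \<Rightarrow> 'a pmf"
  assumes g0: "0 \<le> \<gamma>" and g1: "\<gamma> < 1"
    and distinct: "s_tri \<noteq> s_circ"
    and tri_to_circ: "\<And>a. P s_tri a = return_pmf s_circ"
    and circ_absorb: "\<And>a. P s_circ a = return_pmf s_circ"
    and optimal: "\<And>\<pi> s. value_fn P (cost s_tri) \<gamma> pibar s \<le> value_fn P (cost s_tri) \<gamma> \<pi> s"
begin

abbreviation "c \<equiv> cost s_tri"
abbreviation "V \<equiv> value_fn P c \<gamma> pibar"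
abbreviation "Qs \<equiv> qvalue P c \<gamma> pibar"

lemma c01: "0 \<le> c x a \<and> c x a \<le> 1" by (simp add: cost_def)

lemma ch: "chain c \<gamma>"
  using g0 g1 by unfold_locales (auto simp: cost_def)

lemma Vub: "value_fn P c \<gamma> \<pi> x \<le> (if x = s_circ then 0 else 1)"
proof (rule chain.Super[OF ch])
  show "\<And>x. 0 \<le> (if x = s_circ then 0 else 1::real) \<and> (if x = s_circ then 0 else 1::real) \<le> 1" by simp
  fix x
  let ?W = "\<lambda>x. if x = s_circ then 0 else 1::real"
  have "c x a + \<gamma> * measure_pmf.expectation (P x a) ?W \<le> ?W x" for a
  proof -
    consider "x = s_tri" | "x = s_circ" | "x \<noteq> s_tri" "x \<noteq> s_circ" by blast
    then show ?thesis
    proof cases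
      case 1 then show ?thesis using distinct by (simp add: tri_to_circ cost_def)
    next
      case 2 then show ?thesis using distinct by (simp add: circ_absorb cost_def)
    next
      case 3
      have "measure_pmf.expectation (P x a) ?W \<le> 1" by (rule E_le[where B=1]) auto
      then have "\<gamma> * measure_pmf.expectation (P x a) ?W \<le> \<gamma>" using g0 by (rule mult_left_le)
      then have "\<gamma> * measure_pmf.expectation (P x a) ?W \<le> 1" using g1 by linarith
      then show ?thesis using 3 by (simp add: cost_def)
    qed
  qed
  moreover have "\<bar>c x a + \<gamma> * measure_pmf.expectation (P x a) ?W\<bar> \<le> 2" for a
  proof -
    have "\<bar>measure_pmf.expectation (P x a) ?W\<bar> \<le> 1" by (rule E_abs) auto
    then have "\<bar>\<gamma> * measure_pmf.expectation (P x a) ?W\<bar> \<le> 1" using g0 g1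
      by (simp add: abs_mult mult_le_one)
    then show ?thesis using c01[of x a] by linarith
  qed
  ultimately show "measure_pmf.expectation (\<pi> x) (\<lambda>a. c x a + \<gamma> * measure_pmf.expectation (P x a) ?W) \<le> ?W x"
    by (rule E_le[where B=2])
qed


lemma Vbd: "0 \<le> value_fn P c \<gamma> \<pi> x \<and> value_fn P c \<gamma> \<pi> x \<le> 1"
  using chain.V_bd[OF ch, of P \<pi> x] Vub[of \<pi> x] by (auto split: if_splits)

lemma Vabs: "\<bar>value_fn P c \<gamma> \<pi> x\<bar> \<le> 1"
  using Vbd[of \<pi> x] by (simp add: abs_le_iff)

lemma V_circ: "value_fn P c \<gamma> \<pi> s_circ = 0"
  using Vbd[of \<pi> s_circ] Vub[of \<pi> s_circ] by simp

lemma BellP: "value_fn P c \<gamma> \<pi> x =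
   measure_pmf.expectation (\<pi> x) (\<lambda>a. c x a + \<gamma> * measure_pmf.expectation (P x a) (value_fn P c \<gamma> \<pi>))"
  by (rule chain.Bell[OF ch])

lemma V_tri: "value_fn P c \<gamma> \<pi> s_tri = 1"
  by (subst BellP) (simp add: tri_to_circ V_circ cost_def)

lemma EVabs: "\<bar>measure_pmf.expectation M (value_fn P c \<gamma> \<pi>)\<bar> \<le> 1"
  by (rule E_abs) (rule Vabs)

lemma EVbd: "0 \<le> measure_pmf.expectation M (value_fn P c \<gamma> \<pi>) \<and> measure_pmf.expectation M (value_fn P c \<gamma> \<pi>) \<le> 1"
  using Vbd by (intro conjI E_le[where B=1] E_ge[where B=1]) (auto simp: Vabs)

lemma polQ_ext: "polQ (extQ s_tri s_circ Qs) pibar s = V s"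
proof -
  consider "s = s_tri" | "s = s_circ" | "s \<noteq> s_tri" "s \<noteq> s_circ" by blast
  then show ?thesis
  proof cases
    case 1 then show ?thesis by (simp add: polQ_def extQ_def V_tri)
  next
    case 2 then show ?thesis using distinct by (simp add: polQ_def extQ_def V_circ)
  next
    case 3 then show ?thesis by (simp add: polQ_def extQ_def qvalue_def BellP[of pibar s])
  qed
qed


lemma polQ_ext': "polQ (extQ s_tri s_circ Qs) pibar = V"
  by (rule ext) (rule polQ_ext)

lemma PI: "V s \<le> Qs s a"
proof (rule ccontr)
  assume "\<not> V s \<le> Qs s a"
  then have lt: "Qs s a < V s" by simp
  define \<pi>' where "\<pi>' = pibar(s := return_pmf a)"
  have sup: "measure_pmf.expectation (\<pi>' x) (\<lambda>b. c x b + \<gamma> * measure_pmf.expectation (P x b) V) \<le> V x" for x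
  proof (cases "x = s")
    case True
    then show ?thesis using lt by (simp add: \<pi>'_def qvalue_def)
  next
    case False
    then show ?thesis using BellP[of pibar x] by (simp add: \<pi>'_def)
  qed
  have V'le: "value_fn P c \<gamma> \<pi>' x \<le> V x" for x
    by (rule chain.Super[OF ch]) (use Vbd sup in auto)
  have "value_fn P c \<gamma> \<pi>' s = c s a + \<gamma> * measure_pmf.expectation (P s a) (value_fn P c \<gamma> \<pi>')"
    by (subst BellP) (simp add: \<pi>'_def)
  also have "measure_pmf.expectation (P s a) (value_fn P c \<gamma> \<pi>') \<le> measure_pmf.expectation (P s a) V"
    by (rule integral_mono) (auto intro: int_bdd Vabs V'le)
  then have "c s a + \<gamma> * measure_pmf.expectation (P s a) (value_fn P c \<gamma> \<pi>') \<le> Qs s a"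
    using g0 by (simp add: qvalue_def mult_left_mono)
  finally have "value_fn P c \<gamma> \<pi>' s < V s" using lt by linarith
  moreover have "V s \<le> value_fn P c \<gamma> \<pi>' s" by (rule optimal)
  ultimately show False by linarith
qed

lemma part1: "(Qs, pibar, 0) \<in> G0 P \<gamma> d0 s_tri s_circ (measure_pmf.expectation d0 V)"
proof -
  have "admissible P \<gamma> s_tri s_circ Qs pibar"
    unfolding admissible_def
  proof (intro allI impI conjI)
    fix s :: 's and a :: 'a assume sf: "safe s_tri s_circ s"
    then have c0: "c s a = 0" by (simp add: safe_def cost_def)
    show "0 \<le> Qs s a" using EVbd[of "P s a" pibar] g0 c0 by (simp add: qvalue_def)
    show "Qs s a \<le> \<gamma>" using EVbd[of "P s a" pibar] g0 c0 by (simp add: qvalue_def mult_left_le)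
    show "cost s_tri s a + \<gamma> * measure_pmf.expectation (P s a) (polQ (extQ s_tri s_circ Qs) pibar) \<le> Qs s a"
      by (simp add: polQ_ext' qvalue_def)
  qed
  then show ?thesis unfolding G0_def by (simp add: polQ_ext')
qed

end

locale rctx = mdp P \<gamma> s_tri s_circ pibar
  for P :: "'s \<Rightarrow> 'a \<Rightarrow> 's pmf" and \<gamma> :: real and s_tri s_circ :: 's and pibar :: "'s \<Rightarrow> 'a pmf" +
  fixes d0 :: "'s pmf" and Q :: "'s \<Rightarrow> 'a \<Rightarrow> real" and \<mu> :: "'s \<Rightarrow> 'a pmf"
  assumes mem: "(Q, \<mu>, 0) \<in> G0 P \<gamma> d0 s_tri s_circ (measure_pmf.expectation d0 (value_fn P (cost s_tri) \<gamma> pibar))"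
begin

abbreviation "W \<equiv> polQ (extQ s_tri s_circ Q) \<mu>"

lemma adm: "admissible P \<gamma> s_tri s_circ Q \<mu>" and eqd0: "measure_pmf.expectation d0 W = measure_pmf.expectation d0 V"
  using mem by (auto simp: G0_def)

lemma Qbd: "safe s_tri s_circ s \<Longrightarrow> 0 \<le> Q s a \<and> Q s a \<le> \<gamma>"
  using adm by (auto simp: admissible_def)

lemma Qsup: "safe s_tri s_circ s \<Longrightarrow> c s a + \<gamma> * measure_pmf.expectation (P s a) W \<le> Q s a"
  using adm by (auto simp: admissible_def)

lemma W_tri: "W s_tri = 1" by (simp add: polQ_def extQ_def)
lemma W_circ: "W s_circ = 0" using distinct by (simp add: polQ_def extQ_def)
lemma W_safe: "safe s_tri s_circ s \<Longrightarrow> W s = measure_pmf.expectation (\<mu> s) (Q s)"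
  by (simp add: polQ_def extQ_def safe_def)

lemma Wbd: "0 \<le> W s \<and> W s \<le> 1"
proof (cases "safe s_tri s_circ s")
  case True
  have "\<bar>Q s a\<bar> \<le> 1" for a using Qbd[OF True, of a] g1 by auto
  then show ?thesis unfolding W_safe[OF True] using Qbd[OF True] g1
    by (intro conjI E_le[where B=1] E_ge[where B=1]) (auto intro: order_trans)
next
  case False
  then show ?thesis using W_tri W_circ by (auto simp: safe_def)
qed

lemma Wabs: "\<bar>W s\<bar> \<le> 1" using Wbd[of s] by (simp add: abs_le_iff)

lemma Wsup: "measure_pmf.expectation (\<mu> x) (\<lambda>a. c x a + \<gamma> * measure_pmf.expectation (P x a) W) \<le> W x"
proof -
  consider "x = s_tri" | "x = s_circ" | "safe s_tri s_circ x" by (auto simp: safe_def)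
  then show ?thesis
  proof cases
    case 1 then show ?thesis using distinct by (simp add: tri_to_circ cost_def W_tri W_circ)
  next
    case 2 then show ?thesis using distinct by (simp add: circ_absorb cost_def W_circ)
  next
    case 3
    have b1: "\<bar>c x a + \<gamma> * measure_pmf.expectation (P x a) W\<bar> \<le> 2" for a
    proof -
      have "\<bar>measure_pmf.expectation (P x a) W\<bar> \<le> 1" by (rule E_abs) (rule Wabs)
      then have "\<bar>\<gamma> * measure_pmf.expectation (P x a) W\<bar> \<le> 1" using g0 g1
        by (simp add: abs_mult mult_le_one)
      then show ?thesis using c01[of x a] by linarith
    qed
    have b2: "\<bar>Q x a\<bar> \<le> 1" for a using Qbd[OF 3, of a] g1 by auto
    have "measure_pmf.expectation (\<mu> x) (\<lambda>a. c x a + \<gamma> * measure_pmf.expectation (P x a) W)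
        \<le> measure_pmf.expectation (\<mu> x) (Q x)"
      by (rule integral_mono) (auto intro: int_bdd b1 b2 Qsup[OF 3])
    then show ?thesis using W_safe[OF 3] by simp
  qed
qed

lemma WgeV: "V x \<le> W x"
proof -
  have "value_fn P c \<gamma> \<mu> x \<le> W x"
    by (rule chain.Super[OF ch]) (use Wbd Wsup in auto)
  moreover have "V x \<le> value_fn P c \<gamma> \<mu> x" by (rule optimal)
  ultimately show ?thesis by linarith
qed

lemma Wd0: "s \<in> set_pmf d0 \<Longrightarrow> W s = V s"
proof -
  assume s: "s \<in> set_pmf d0"
  have i: "integrable (measure_pmf d0) (\<lambda>x. W x - V x)"
    by (intro Bochner_Integration.integrable_diff int_bdd[where B=1] Wabs Vabs)
  have "measure_pmf.expectation d0 (\<lambda>x. W x - V x) = 0"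
    using eqd0 by (simp add: Bochner_Integration.integral_diff int_bdd[where B=1] Wabs Vabs)
  then have "AE x in measure_pmf d0. W x - V x = 0"
    using integral_nonneg_eq_0_iff_AE[OF i] WgeV by (auto intro: AE_pmfI)
  then show ?thesis using s by (auto simp: AE_measure_pmf_iff)
qed


lemma gamma0: assumes "\<gamma> = 0" shows "W x = V x"
proof -
  consider "x = s_tri" | "x = s_circ" | "safe s_tri s_circ x" by (auto simp: safe_def)
  then show ?thesis
  proof cases
    case 1 then show ?thesis by (simp add: W_tri V_tri)
  next
    case 2 then show ?thesis by (simp add: W_circ V_circ)
  next
    case 3
    have "Q x a = 0" for a using Qbd[OF 3, of a] assms by auto
    then have "Q x = (\<lambda>_. 0)" by (rule ext)
    then have "W x = 0" using W_safe[OF 3] by simp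
    moreover have "V x = 0" using 3 assms by (subst BellP) (simp add: cost_def safe_def)
    ultimately show ?thesis by simp
  qed
qed

lemma step:
  assumes eq: "W s = V s" and nI: "(s, a) \<notin> interv_set s_tri s_circ Q \<mu> 0" and s': "s' \<in> set_pmf (P s a)"
  shows "(s, a) \<notin> interv_set s_tri s_circ Qs pibar 0 \<and> W s' = V s'"
proof (cases "safe s_tri s_circ s")
  case False
  then have "s = s_tri \<or> s = s_circ" by (auto simp: safe_def)
  then have "s' = s_circ" using s' by (auto simp: tri_to_circ circ_absorb)
  then show ?thesis using False by (simp add: interv_set_def W_circ V_circ)
next
  case True
  have Qle: "Q s a \<le> W s" using nI True by (simp add: interv_set_def extQ_def safe_def)
  have EVW: "measure_pmf.expectation (P s a) V \<le> measure_pmf.expectation (P s a) W"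
    by (rule integral_mono) (auto intro: int_bdd[where B=1] Wabs Vabs WgeV)
  have "Qs s a \<le> c s a + \<gamma> * measure_pmf.expectation (P s a) W"
    using EVW g0 by (simp add: qvalue_def mult_left_mono)
  also have "\<dots> \<le> Q s a" by (rule Qsup[OF True])
  finally have Qs_le: "Qs s a \<le> V s" using Qle eq by linarith
  then have notI: "(s, a) \<notin> interv_set s_tri s_circ Qs pibar 0"
    using True by (simp add: interv_set_def polQ_ext' extQ_def safe_def)
  have W's: "W s' = V s'"
  proof (cases "\<gamma> = 0")
    case True then show ?thesis by (rule gamma0)
  next
    case False
    then have gp: "0 < \<gamma>" using g0 by simp
    have "\<gamma> * measure_pmf.expectation (P s a) W \<le> \<gamma> * measure_pmf.expectation (P s a) V"
      using PI[of s a] Qs_le Qsup[OF True, of a] Qle eq by (simp add: qvalue_def)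
    then have "measure_pmf.expectation (P s a) W \<le> measure_pmf.expectation (P s a) V"
      using gp by simp
    with EVW have E0: "measure_pmf.expectation (P s a) (\<lambda>x. W x - V x) = 0"
      by (simp add: Bochner_Integration.integral_diff int_bdd[where B=1] Wabs Vabs)
    have i: "integrable (measure_pmf (P s a)) (\<lambda>x. W x - V x)"
      by (intro Bochner_Integration.integrable_diff int_bdd[where B=1] Wabs Vabs)
    have "AE x in measure_pmf (P s a). W x - V x = 0"
      using integral_nonneg_eq_0_iff_AE[OF i] WgeV E0 by (auto intro: AE_pmfI)
    then show ?thesis using s' by (auto simp: AE_measure_pmf_iff)
  qed
  show ?thesis using notI W's by simp
qed


lemma reach:
  "Some s \<in> set_pmf (sdist (abs_P P (interv_set s_tri s_circ Q \<mu> 0)) (abs_pol \<pi>) (map_pmf Some d0) n) \<Longrightarrow>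
   Some s \<in> set_pmf (sdist (abs_P P (interv_set s_tri s_circ Qs pibar 0)) (abs_pol \<pi>) (map_pmf Some d0) n) \<and> W s = V s"
proof (induction n arbitrary: s)
  case 0
  then show ?case using Wd0 by auto
next
  case (Suc n)
  let ?I = "interv_set s_tri s_circ Q \<mu> 0" and ?J = "interv_set s_tri s_circ Qs pibar 0"
  from Suc.prems obtain x a where x: "x \<in> set_pmf (sdist (abs_P P ?I) (abs_pol \<pi>) (map_pmf Some d0) n)"
    and a: "a \<in> set_pmf (abs_pol \<pi> x)" and sx: "Some s \<in> set_pmf (abs_P P ?I x a)"
    by auto
  obtain s0 where x0: "x = Some s0" using sx by (cases x) (auto simp: abs_P_def)
  have nI: "(s0, a) \<notin> ?I" and s': "s \<in> set_pmf (P s0 a)"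
    using sx x0 by (auto simp: abs_P_def split: if_splits)
  have IH: "Some s0 \<in> set_pmf (sdist (abs_P P ?J) (abs_pol \<pi>) (map_pmf Some d0) n)" "W s0 = V s0"
    using Suc.IH[of s0] x x0 by auto
  from step[OF IH(2) nI s'] have nJ: "(s0, a) \<notin> ?J" and eq: "W s = V s" by auto
  have "Some s \<in> set_pmf (abs_P P ?J (Some s0) a)" using nJ s' by (simp add: abs_P_def)
  then have "Some s \<in> set_pmf (sdist (abs_P P ?J) (abs_pol \<pi>) (map_pmf Some d0) (Suc n))"
    using IH(1) a x0 by auto
  then show ?case using eq by simp
qed

lemma supp_incl:
  "supp_SA (dtilde P \<gamma> d0 (interv_set s_tri s_circ Q \<mu> 0) \<pi>)
     \<subseteq> supp_SA (dtilde P \<gamma> d0 (interv_set s_tri s_circ Qs pibar 0) \<pi>)"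
  unfolding supp_SA_def dtilde_def
proof (clarify)
  fix s a
  assume pos: "0 < disc_sa (abs_P P (interv_set s_tri s_circ Q \<mu> 0)) (abs_pol \<pi>) (map_pmf Some d0) \<gamma> (Some (fst (s, a)), snd (s, a))"
  show "0 < disc_sa (abs_P P (interv_set s_tri s_circ Qs pibar 0)) (abs_pol \<pi>) (map_pmf Some d0) \<gamma> (Some (fst (s, a)), snd (s, a))"
  proof (rule disc_mono[OF g0 g1 _ pos])
    fix t
    assume "0 < pmf (sadist (abs_P P (interv_set s_tri s_circ Q \<mu> 0)) (abs_pol \<pi>) (map_pmf Some d0) t) (Some (fst (s, a)), snd (s, a))"
    then have "(Some s, a) \<in> set_pmf (sadist (abs_P P (interv_set s_tri s_circ Q \<mu> 0)) (abs_pol \<pi>) (map_pmf Some d0) t)"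
      by (simp add: pmf_positive_iff)
    then have "(Some s, a) \<in> set_pmf (sadist (abs_P P (interv_set s_tri s_circ Qs pibar 0)) (abs_pol \<pi>) (map_pmf Some d0) t)"
      by (rule sadist_mono[rotated]) (use reach in blast)
    then show "0 < pmf (sadist (abs_P P (interv_set s_tri s_circ Qs pibar 0)) (abs_pol \<pi>) (map_pmf Some d0) t) (Some (fst (s, a)), snd (s, a))"
      by (simp add: pmf_positive_iff)
  qed
qed

end
theorem mainTheorem5:
  fixes P :: "'s::countable \<Rightarrow> 'a::countable \<Rightarrow> 's pmf"
    and r :: "'s \<Rightarrow> 'a \<Rightarrow> real"
    and \<gamma> :: real
    and d0 :: "'s pmf"
    and s_tri s_circ :: 's
    and pibar :: "'s \<Rightarrow> 'a pmf"
  assumes r_range: "\<And>s a. 0 \<le> r s a \<and> r s a \<le> 1"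
    and gamma: "0 \<le> \<gamma>" "\<gamma> < 1"
    and distinct: "s_tri \<noteq> s_circ"
    and tri_to_circ: "\<And>a. P s_tri a = return_pmf s_circ"
    and circ_absorb: "\<And>a. P s_circ a = return_pmf s_circ"
    and r_unsafe: "\<And>a. r s_tri a = 0" "\<And>a. r s_circ a = 0"
    and d0_circ: "pmf d0 s_circ = 0"
    and optimal: "\<And>\<pi> s. value_fn P (cost s_tri) \<gamma> pibar s \<le> value_fn P (cost s_tri) \<gamma> \<pi> s"
  shows "(qvalue P (cost s_tri) \<gamma> pibar, pibar, 0)
           \<in> G0 P \<gamma> d0 s_tri s_circ
               (measure_pmf.expectation d0 (value_fn P (cost s_tri) \<gamma> pibar))
       \<and> (\<forall>Q \<mu> \<pi>. (Q, \<mu>, 0) \<in> G0 P \<gamma> d0 s_tri s_circ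
               (measure_pmf.expectation d0 (value_fn P (cost s_tri) \<gamma> pibar)) \<longrightarrow>
            supp_SA (dtilde P \<gamma> d0 (interv_set s_tri s_circ Q \<mu> 0) \<pi>)
              \<subseteq> supp_SA (dtilde P \<gamma> d0
                   (interv_set s_tri s_circ (qvalue P (cost s_tri) \<gamma> pibar) pibar 0) \<pi>))"
proof -
  interpret mdp P \<gamma> s_tri s_circ pibar
    by unfold_locales (use gamma distinct tri_to_circ circ_absorb optimal in auto)
  show ?thesis
  proof (intro conjI allI impI)
    show "(qvalue P (cost s_tri) \<gamma> pibar, pibar, 0)
           \<in> G0 P \<gamma> d0 s_tri s_circ (measure_pmf.expectation d0 (value_fn P (cost s_tri) \<gamma> pibar))"
      by (rule part1)
  next
    fix Q \<mu> \<pi>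
    assume m: "(Q, \<mu>, 0) \<in> G0 P \<gamma> d0 s_tri s_circ (measure_pmf.expectation d0 (value_fn P (cost s_tri) \<gamma> pibar))"
    interpret rctx P \<gamma> s_tri s_circ pibar d0 Q \<mu>
      by unfold_locales (rule m)
    show "supp_SA (dtilde P \<gamma> d0 (interv_set s_tri s_circ Q \<mu> 0) \<pi>)
          \<subseteq> supp_SA (dtilde P \<gamma> d0 (interv_set s_tri s_circ (qvalue P (cost s_tri) \<gamma> pibar) pibar 0) \<pi>)"
      by (rule supp_incl)
  qed
qed

end
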